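(* Let $L$ be a Stonean locale. Restriction along the inclusion of posets $\mathrm{COpen}(L)\to L$ is a bijection from the set of normal valuations on $L$ to the set of continuous valuations on the complete Boolean algebra $\mathrm{COpen}(L)$ of compact opens of $L$; the inverse is given by precomposition with the frame homomorphism $\neg\neg:L\to\mathrm{COpen}(L)$.
   Context: A frame is a poset with finite meets and arbitrary joins, binary meets distributing over arbitrary joins; a locale is a frame viewed in the opposite category. $\neg x=\sup\{w:w\wedge x=0\}$. $a\in L$ is a compact open if $\bigvee S\ge a$ implies $\bigvee F\ge a$ for some finite $F\subset S$. $L$ is coherent if compact opens are closed under finite meets (including $1$) and every element is a join of compact opens; regular if $y=\bigvee\{x:\neg x\vee y=1\}$ for all $y$; extremally disconnected if $\neg x\vee\neg\neg x=1$ for all $x$. A Stonean locale is a coherent, regular, extremally disconnected locale (its compact opens are exactly the elements with $a=\neg\neg a$ and form a complete Boolean algebra). A continuous valuation on a lattice is $\nu$ to $[0,\infty)$ with $\nu(0)=0$, $\nu(x)+\nu(y)=\nu(x\vee y)+\nu(x\wedge y)$, monotone, preserving suprema of directed subsets (suprema computed in the lattice in question); a normal valuation on $L$ is a continuous valuation with $\nu(\neg\neg a)=\nu(a)$ for all $a$. *)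

theory Defs
  imports Main "HOL.Real"
begin

text \<open>A frame: a complete lattice in which binary meets distribute over arbitrary joins.
  The locale L is represented by its frame of opens, a type 'a of class complete_lattice.\<close>

definition is_frame :: "'a::complete_lattice itself \<Rightarrow> bool" where
  "is_frame _ \<longleftrightarrow> (\<forall>(x::'a) S. inf x (Sup S) = Sup ((\<lambda>s. inf x s) ` S))"

definition neg :: "'a::complete_lattice \<Rightarrow> 'a" where
  "neg x = Sup {w. inf w x = bot}"

definition compact_open :: "'a::complete_lattice \<Rightarrow> bool" where
  "compact_open a \<longleftrightarrow> (\<forall>S. a \<le> Sup S \<longrightarrow> (\<exists>F. F \<subseteq> S \<and> finite F \<and> a \<le> Sup F))"

definition COpen :: "'a::complete_lattice set" where
  "COpen = {a. compact_open a}"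

definition coherent :: "'a::complete_lattice itself \<Rightarrow> bool" where
  "coherent _ \<longleftrightarrow>
     compact_open (top::'a) \<and>
     (\<forall>a b::'a. compact_open a \<and> compact_open b \<longrightarrow> compact_open (inf a b)) \<and>
     (\<forall>y::'a. \<exists>S. (\<forall>s\<in>S. compact_open s) \<and> y = Sup S)"

definition regular :: "'a::complete_lattice itself \<Rightarrow> bool" where
  "regular _ \<longleftrightarrow> (\<forall>y::'a. y = Sup {x. sup (neg x) y = top})"

definition extremally_disconnected :: "'a::complete_lattice itself \<Rightarrow> bool" where
  "extremally_disconnected _ \<longleftrightarrow> (\<forall>x::'a. sup (neg x) (neg (neg x)) = top)"

definition stonean :: "'a::complete_lattice itself \<Rightarrow> bool" where
  "stonean T \<longleftrightarrow> is_frame T \<and> coherent T \<and> regular T \<and> extremally_disconnected T"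

definition is_lub_in :: "'a::complete_lattice set \<Rightarrow> 'a set \<Rightarrow> 'a \<Rightarrow> bool" where
  "is_lub_in P S x \<longleftrightarrow> x \<in> P \<and> (\<forall>s\<in>S. s \<le> x) \<and> (\<forall>y\<in>P. (\<forall>s\<in>S. s \<le> y) \<longrightarrow> x \<le> y)"

definition is_glb_in :: "'a::complete_lattice set \<Rightarrow> 'a set \<Rightarrow> 'a \<Rightarrow> bool" where
  "is_glb_in P S x \<longleftrightarrow> x \<in> P \<and> (\<forall>s\<in>S. x \<le> s) \<and> (\<forall>y\<in>P. (\<forall>s\<in>S. y \<le> s) \<longrightarrow> y \<le> x)"

definition directed_set :: "'a::complete_lattice set \<Rightarrow> bool" where
  "directed_set D \<longleftrightarrow> D \<noteq> {} \<and> (\<forall>x\<in>D. \<forall>y\<in>D. \<exists>z\<in>D. x \<le> z \<and> y \<le> z)"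

text \<open>A continuous valuation on the lattice P (a subposet of 'a which is a lattice),
  with lattice operations and directed suprema computed in P. Only the values on P matter.\<close>

definition continuous_valuation_on :: "'a::complete_lattice set \<Rightarrow> ('a \<Rightarrow> real) \<Rightarrow> bool" where
  "continuous_valuation_on P \<nu> \<longleftrightarrow>
     (\<forall>x\<in>P. 0 \<le> \<nu> x) \<and>
     (\<forall>z. is_lub_in P {} z \<longrightarrow> \<nu> z = 0) \<and>
     (\<forall>x\<in>P. \<forall>y\<in>P. \<forall>j m. is_lub_in P {x, y} j \<and> is_glb_in P {x, y} m
         \<longrightarrow> \<nu> x + \<nu> y = \<nu> j + \<nu> m) \<and>
     (\<forall>x\<in>P. \<forall>y\<in>P. x \<le> y \<longrightarrow> \<nu> x \<le> \<nu> y) \<and>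
     (\<forall>D s. D \<subseteq> P \<and> directed_set D \<and> is_lub_in P D s \<longrightarrow> \<nu> s = (SUP d\<in>D. \<nu> d))"

definition normal_valuation :: "('a::complete_lattice \<Rightarrow> real) \<Rightarrow> bool" where
  "normal_valuation \<nu> \<longleftrightarrow> continuous_valuation_on UNIV \<nu> \<and> (\<forall>a. \<nu> (neg (neg a)) = \<nu> a)"

text \<open>Valuations on COpen(L) are represented extensionally: functions vanishing off COpen(L).\<close>

definition restrict_COpen :: "('a::complete_lattice \<Rightarrow> real) \<Rightarrow> 'a \<Rightarrow> real" where
  "restrict_COpen \<nu> = (\<lambda>x. if x \<in> COpen then \<nu> x else 0)"

definition COpen_valuations :: "('a::complete_lattice \<Rightarrow> real) set" where
  "COpen_valuations = {\<mu>. continuous_valuation_on COpen \<mu> \<and> (\<forall>x. x \<notin> COpen \<longrightarrow> \<mu> x = 0)}"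

end

theory Submission
  imports Defs
begin

lemma frameD:
  assumes "is_frame TYPE('a::complete_lattice)"
  shows "inf (x::'a) (Sup S) = Sup ((\<lambda>s. inf x s) ` S)"
  using assms unfolding is_frame_def by blast

lemma frame_bin:
  assumes "is_frame TYPE('a::complete_lattice)"
  shows "inf (x::'a) (sup a b) = sup (inf x a) (inf x b)"
  using frameD[OF assms, of x "{a,b}"] by simp

lemma neg_le_iff:
  assumes F: "is_frame TYPE('a::complete_lattice)"
  shows "(w::'a) \<le> neg x \<longleftrightarrow> inf w x = bot"
proof
  assume "w \<le> neg x"
  then have "inf w x \<le> inf x (neg x)" by (simp add: le_infI1 inf_commute)
  also have "inf x (neg x) = Sup ((\<lambda>s. inf x s) ` {w. inf w x = bot})"
    unfolding neg_def by (rule frameD[OF F])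
  also have "\<dots> = bot" by (auto simp: inf_commute intro!: Sup_eqI)
  finally show "inf w x = bot" by (simp add: bot_unique)
next
  assume "inf w x = bot" then show "w \<le> neg x" unfolding neg_def by (simp add: Sup_upper)
qed

lemma neg_inf:
  assumes F: "is_frame TYPE('a::complete_lattice)"
  shows "inf (neg (x::'a)) x = bot" "inf x (neg x) = bot"
  using neg_le_iff[OF F, of "neg x" x] by (auto simp: inf_commute)

lemma neg_anti:
  assumes F: "is_frame TYPE('a::complete_lattice)" and "(x::'a) \<le> y"
  shows "neg y \<le> neg x"
proof -
  have "inf (neg y) x \<le> inf (neg y) y" using assms(2) by (simp add: le_infI2)
  then have "inf (neg y) x = bot" using neg_inf[OF F, of y] by (simp add: bot_unique)
  then show ?thesis using neg_le_iff[OF F] by blast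
qed

lemma le_nn:
  assumes F: "is_frame TYPE('a::complete_lattice)"
  shows "(x::'a) \<le> neg (neg x)"
  using neg_le_iff[OF F] neg_inf[OF F] by blast

lemma nnn:
  assumes F: "is_frame TYPE('a::complete_lattice)"
  shows "neg (neg (neg (x::'a))) = neg x"
  by (meson F antisym le_nn neg_anti)

lemma nn_mono:
  assumes F: "is_frame TYPE('a::complete_lattice)" and "(x::'a) \<le> y"
  shows "neg (neg x) \<le> neg (neg y)"
  by (simp add: F assms(2) neg_anti)

lemma neg_bot:
  assumes F: "is_frame TYPE('a::complete_lattice)"
  shows "neg (bot::'a) = top" "neg (top::'a) = bot"
  using neg_le_iff[OF F, of top bot] neg_inf[OF F, of top] by (auto simp: top_unique)

lemma neg_sup:
  assumes F: "is_frame TYPE('a::complete_lattice)"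
  shows "neg (sup (x::'a) y) = inf (neg x) (neg y)"
proof -
  have "w \<le> neg (sup x y) \<longleftrightarrow> w \<le> inf (neg x) (neg y)" for w
    using neg_le_iff[OF F] frame_bin[OF F, of w x y] by simp
  note h = this
  have 1: "neg (sup x y) \<le> inf (neg x) (neg y)" using h[of "neg (sup x y)"] by simp
  have 2: "inf (neg x) (neg y) \<le> neg (sup x y)" using h[of "inf (neg x) (neg y)"] by simp
  show ?thesis by (rule antisym[OF 1 2])
qed

lemma nn_inf:
  assumes F: "is_frame TYPE('a::complete_lattice)"
  shows "neg (neg (inf (a::'a) b)) = inf (neg (neg a)) (neg (neg b))"
proof (rule antisym)
  show "neg (neg (inf a b)) \<le> inf (neg (neg a)) (neg (neg b))"
    using nn_mono[OF F, of "inf a b" a] nn_mono[OF F, of "inf a b" b] by simp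
  define c where "c = neg (inf a b)"
  have "inf (inf c a) b = bot" unfolding c_def using neg_inf(1)[OF F, of "inf a b"]
    by (simp add: inf_assoc)
  then have "inf c a \<le> neg b" using neg_le_iff[OF F, of "inf c a" b] by simp
  then have "inf (inf c a) (neg (neg b)) = bot"
    using neg_le_iff[OF F, of "inf c a" "neg (neg b)"] nnn[OF F, of b] by simp
  then have "inf (inf c (neg (neg b))) a = bot" by (simp add: inf_aci)
  then have "inf c (neg (neg b)) \<le> neg a" using neg_le_iff[OF F, of "inf c (neg (neg b))" a] by simp
  then have "inf (inf c (neg (neg b))) (neg (neg a)) = bot"
    using neg_le_iff[OF F, of "inf c (neg (neg b))" "neg (neg a)"] nnn[OF F, of a] by simp
  then have "inf (inf (neg (neg a)) (neg (neg b))) c = bot" by (simp add: inf_aci)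
  then show "inf (neg (neg a)) (neg (neg b)) \<le> neg (neg (inf a b))"
    unfolding c_def using neg_le_iff[OF F, of "inf (neg (neg a)) (neg (neg b))" "neg (inf a b)"] by simp
qed

lemma nn_sup:
  assumes F: "is_frame TYPE('a::complete_lattice)"
    and E: "extremally_disconnected TYPE('a)"
  shows "neg (neg (sup (x::'a) y)) = sup (neg (neg x)) (neg (neg y))"
proof (rule antisym)
  show "sup (neg (neg x)) (neg (neg y)) \<le> neg (neg (sup x y))"
    using nn_mono[OF F, of x "sup x y"] nn_mono[OF F, of y "sup x y"] by simp
  define w where "w = neg (neg (sup x y))"
  have w: "w = neg (inf (neg x) (neg y))" unfolding w_def by (simp add: F neg_sup)
  have ex: "sup (neg z) (neg (neg z)) = top" for z::'a
    using E unfolding extremally_disconnected_def by blast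
  have wb: "inf (inf w (neg x)) (neg y) = bot" unfolding w
    using neg_inf[OF F, of "inf (neg x) (neg y)"] by (simp add: inf_aci)
  have "inf w (neg x) = inf (inf w (neg x)) (sup (neg y) (neg (neg y)))" by (simp add: ex)
  also have "\<dots> = inf (inf w (neg x)) (neg (neg y))" using frame_bin[OF F] wb by simp
  finally have 1: "inf w (neg x) \<le> neg (neg y)" by (metis inf.cobounded2)
  have "w = inf w (sup (neg x) (neg (neg x)))" by (simp add: ex)
  also have "\<dots> = sup (inf w (neg x)) (inf w (neg (neg x)))" using frame_bin[OF F] by simp
  also have "\<dots> \<le> sup (neg (neg x)) (neg (neg y))" using 1
    by (simp add: le_supI1 le_supI2)
  finally show "w \<le> sup (neg (neg x)) (neg (neg y))" .
qed

lemma Sup_insert_le: "Sup (F::'a::complete_lattice set) \<le> sup a (Sup (F - {a}))"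
proof -
  have "F \<subseteq> insert a (F - {a})" by blast
  then have "Sup F \<le> Sup (insert a (F - {a}))" by (rule Sup_subset_mono)
  then show ?thesis by (simp only: Sup_insert)
qed

lemma nn_compact:
  assumes F: "is_frame TYPE('a::complete_lattice)"
    and E: "extremally_disconnected TYPE('a)"
    and T: "compact_open (top::'a)"
  shows "compact_open (neg (neg (a::'a)))"
  unfolding compact_open_def
proof (intro allI impI)
  fix S assume S: "neg (neg a) \<le> Sup S"
  have ex: "sup (neg a) (neg (neg a)) = top"
    using E unfolding extremally_disconnected_def by blast
  have "top \<le> Sup (insert (neg a) S)" using S ex
    by (metis Sup_insert sup.mono order_refl)
  then obtain G where G: "G \<subseteq> insert (neg a) S" "finite G" "top \<le> Sup G"
    using T unfolding compact_open_def by blast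
  define H where "H = G - {neg a}"
  have H: "H \<subseteq> S" "finite H" using G unfolding H_def by auto
  have "top \<le> sup (neg a) (Sup H)" using G(3) Sup_insert_le[of G "neg a"] unfolding H_def
    by (meson order_trans)
  then have "sup (neg a) (Sup H) = top" by (simp add: top_unique)
  then have "neg (neg a) = inf (neg (neg a)) (sup (neg a) (Sup H))" by simp
  also have "\<dots> = sup (inf (neg (neg a)) (neg a)) (inf (neg (neg a)) (Sup H))"
    by (rule frame_bin[OF F])
  also have "\<dots> = inf (neg (neg a)) (Sup H)" using neg_inf[OF F, of "neg a"] by simp
  also have "\<dots> \<le> Sup H" by simp
  finally show "\<exists>F. F \<subseteq> S \<and> finite F \<and> neg (neg a) \<le> Sup F" using H by blast
qed

lemma compact_nn:
  assumes F: "is_frame TYPE('a::complete_lattice)"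
    and R: "regular TYPE('a)"
    and C: "compact_open (c::'a)"
  shows "neg (neg c) = c"
proof -
  define X where "X = {x::'a. sup (neg x) c = top}"
  have cX: "c = Sup X" using R unfolding regular_def X_def by blast
  have closed: "Sup G \<in> X" if "finite G" "G \<subseteq> X" for G
    using that
  proof (induction G rule: finite_induct)
    case empty then show ?case by (simp add: X_def neg_bot[OF F])
  next
    case (insert x G)
    then have a: "sup (neg x) c = top" and b: "sup (neg (Sup G)) c = top"
      by (auto simp: X_def)
    have "top = inf (sup (neg x) c) (sup (neg (Sup G)) c)" using a b by simp
    also have "\<dots> = sup (inf (sup (neg x) c) (neg (Sup G))) (inf (sup (neg x) c) c)"
      by (rule frame_bin[OF F])
    also have "\<dots> \<le> sup (inf (neg x) (neg (Sup G))) c"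
    proof -
      have "inf (sup (neg x) c) (neg (Sup G)) = inf (neg (Sup G)) (sup (neg x) c)"
        by (simp add: inf_commute)
      also have "\<dots> = sup (inf (neg (Sup G)) (neg x)) (inf (neg (Sup G)) c)"
        by (rule frame_bin[OF F])
      also have "\<dots> \<le> sup (inf (neg x) (neg (Sup G))) c"
        by (simp add: inf_commute le_supI1 le_supI2)
      finally show ?thesis by (simp add: le_supI2)
    qed
    finally have "sup (inf (neg x) (neg (Sup G))) c = top" by (simp add: top_unique)
    then show ?case by (simp add: X_def neg_sup[OF F])
  qed
  obtain G where G: "G \<subseteq> X" "finite G" "c \<le> Sup G"
    using C cX unfolding compact_open_def by (metis order_refl)
  define x where "x = Sup G"
  have xX: "sup (neg x) c = top" using closed[OF G(2,1)] unfolding x_def X_def by simp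
  have "neg x \<le> neg c" using G(3) unfolding x_def by (rule neg_anti[OF F])
  then have cc: "sup (neg c) c = top" using xX by (metis sup.mono order_refl top_unique)
  have "neg (neg c) = inf (neg (neg c)) (sup (neg c) c)" using cc by simp
  also have "\<dots> = sup (inf (neg (neg c)) (neg c)) (inf (neg (neg c)) c)"
    by (rule frame_bin[OF F])
  also have "\<dots> = inf (neg (neg c)) c" using neg_inf[OF F, of "neg c"] by simp
  also have "\<dots> \<le> c" by simp
  finally show ?thesis using le_nn[OF F, of c] by simp
qed


lemma lub_UNIV: "is_lub_in UNIV S (s::'a::complete_lattice) \<longleftrightarrow> s = Sup S"
  unfolding is_lub_in_def by (auto intro: Sup_upper Sup_least antisym)

lemma glb_UNIV: "is_glb_in UNIV S (s::'a::complete_lattice) \<longleftrightarrow> s = Inf S"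
  unfolding is_glb_in_def by (auto intro: Inf_lower Inf_greatest antisym)

lemma lub_unique: "is_lub_in P S (x::'a::complete_lattice) \<Longrightarrow> is_lub_in P S y \<Longrightarrow> x = y"
  unfolding is_lub_in_def by (meson antisym)

lemma glb_unique: "is_glb_in P S (x::'a::complete_lattice) \<Longrightarrow> is_glb_in P S y \<Longrightarrow> x = y"
  unfolding is_glb_in_def by (meson antisym)

lemma stoneanD:
  assumes "stonean TYPE('a::complete_lattice)"
  shows "is_frame TYPE('a)" "extremally_disconnected TYPE('a)" "regular TYPE('a)"
    "compact_open (top::'a)"
  using assms unfolding stonean_def coherent_def by auto

lemma COpen_iff:
  assumes S: "stonean TYPE('a::complete_lattice)"
  shows "(a::'a) \<in> COpen \<longleftrightarrow> neg (neg a) = a"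
  using compact_nn[OF stoneanD(1,3)[OF S]] nn_compact[OF stoneanD(1,2,4)[OF S]]
  unfolding COpen_def by (metis mem_Collect_eq)

lemma nn_COpen:
  assumes S: "stonean TYPE('a::complete_lattice)"
  shows "neg (neg (a::'a)) \<in> COpen"
  using nn_compact[OF stoneanD(1,2,4)[OF S]] unfolding COpen_def by simp

lemma lub_COpen:
  assumes S: "stonean TYPE('a::complete_lattice)"
  shows "is_lub_in COpen (D::'a set) (neg (neg (Sup D)))"
    "is_lub_in COpen (neg ` neg ` D) (neg (neg (Sup D)))"
proof -
  note F = stoneanD(1)[OF S]
  have ub: "Sup D \<le> y" if "y \<in> COpen" "\<forall>d\<in>D. neg (neg d) \<le> y" for y
    using that le_nn[OF F] by (meson Sup_least order_trans)
  have ub2: "neg (neg (Sup D)) \<le> y" if "y \<in> COpen" "Sup D \<le> y" for y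
    using that nn_mono[OF F, of "Sup D" y] COpen_iff[OF S, of y] by simp
  show "is_lub_in COpen D (neg (neg (Sup D)))"
    unfolding is_lub_in_def
    using nn_COpen[OF S] le_nn[OF F] ub2
    by (meson Sup_least Sup_upper order_trans)
  show "is_lub_in COpen (neg ` neg ` D) (neg (neg (Sup D)))"
    unfolding is_lub_in_def
    using nn_COpen[OF S] ub ub2 nn_mono[OF F] by (auto intro!: Sup_upper simp: nn_mono[OF F] Sup_upper)
qed

lemma cvD:
  assumes "continuous_valuation_on P \<nu>"
  shows "\<And>x. x \<in> P \<Longrightarrow> 0 \<le> \<nu> x"
    "\<And>z. is_lub_in P {} z \<Longrightarrow> \<nu> z = 0"
    "\<And>x y j m. x \<in> P \<Longrightarrow> y \<in> P \<Longrightarrow> is_lub_in P {x, y} j \<Longrightarrow> is_glb_in P {x, y} m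
         \<Longrightarrow> \<nu> x + \<nu> y = \<nu> j + \<nu> m"
    "\<And>x y. x \<in> P \<Longrightarrow> y \<in> P \<Longrightarrow> x \<le> y \<Longrightarrow> \<nu> x \<le> \<nu> y"
    "\<And>D s. D \<subseteq> P \<Longrightarrow> directed_set D \<Longrightarrow> is_lub_in P D s \<Longrightarrow> \<nu> s = (SUP d\<in>D. \<nu> d)"
proof -
  note a = assms[unfolded continuous_valuation_on_def]
  note a1 = a[THEN conjunct1] and a2 = a[THEN conjunct2, THEN conjunct1]
    and a3 = a[THEN conjunct2, THEN conjunct2, THEN conjunct1]
    and a4 = a[THEN conjunct2, THEN conjunct2, THEN conjunct2, THEN conjunct1]
    and a5 = a[THEN conjunct2, THEN conjunct2, THEN conjunct2, THEN conjunct2]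
  show "\<And>x. x \<in> P \<Longrightarrow> 0 \<le> \<nu> x" using a1 by (rule bspec)
  show "\<And>z. is_lub_in P {} z \<Longrightarrow> \<nu> z = 0" using a2 by (rule allE) (erule mp)
  show "\<And>x y j m. x \<in> P \<Longrightarrow> y \<in> P \<Longrightarrow> is_lub_in P {x, y} j \<Longrightarrow> is_glb_in P {x, y} m
         \<Longrightarrow> \<nu> x + \<nu> y = \<nu> j + \<nu> m" using a3 by simp
  show "\<And>x y. x \<in> P \<Longrightarrow> y \<in> P \<Longrightarrow> x \<le> y \<Longrightarrow> \<nu> x \<le> \<nu> y" using a4 by simp
  show "\<And>D s. D \<subseteq> P \<Longrightarrow> directed_set D \<Longrightarrow> is_lub_in P D s \<Longrightarrow> \<nu> s = (SUP d\<in>D. \<nu> d)"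
    using a5 by simp
qed

lemma cvI:
  assumes "\<And>x. x \<in> P \<Longrightarrow> 0 \<le> \<nu> x"
    "\<And>z. is_lub_in P {} z \<Longrightarrow> \<nu> z = 0"
    "\<And>x y j m. x \<in> P \<Longrightarrow> y \<in> P \<Longrightarrow> is_lub_in P {x, y} j \<Longrightarrow> is_glb_in P {x, y} m
         \<Longrightarrow> \<nu> x + \<nu> y = \<nu> j + \<nu> m"
    "\<And>x y. x \<in> P \<Longrightarrow> y \<in> P \<Longrightarrow> x \<le> y \<Longrightarrow> \<nu> x \<le> \<nu> y"
    "\<And>D s. D \<subseteq> P \<Longrightarrow> directed_set D \<Longrightarrow> is_lub_in P D s \<Longrightarrow> \<nu> s = (SUP d\<in>D. \<nu> d)"
  shows "continuous_valuation_on P \<nu>"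
  unfolding continuous_valuation_on_def
  by (intro conjI ballI allI impI; (elim conjE)?; rule assms; assumption)

lemma normal_of:
  assumes S: "stonean TYPE('a::complete_lattice)" and M: "\<mu> \<in> COpen_valuations"
  shows "normal_valuation (\<lambda>a::'a. \<mu> (neg (neg a)))"
proof -
  note F = stoneanD(1)[OF S]
  note E = stoneanD(2)[OF S]
  have cv: "continuous_valuation_on COpen \<mu>" using M unfolding COpen_valuations_def by simp
  note c = cvD[OF cv]
  have botC: "(bot::'a) \<in> COpen" unfolding COpen_def compact_open_def by (intro CollectI allI impI exI[of _ "{}"]) simp
  have "is_lub_in COpen {} (bot::'a)" unfolding is_lub_in_def using botC by simp
  then have mb: "\<mu> bot = 0" by (rule c(2))
  have modular: "\<mu> (neg (neg x)) + \<mu> (neg (neg y)) = \<mu> (neg (neg j)) + \<mu> (neg (neg m))"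
    if "is_lub_in UNIV {x, y} j" "is_glb_in UNIV {x, y} m" for x y j m :: 'a
  proof -
    have j: "j = sup x y" and m: "m = inf x y" using that unfolding lub_UNIV glb_UNIV by simp_all
    let ?x = "neg (neg x)" and ?y = "neg (neg y)"
    have xC: "?x \<in> COpen" and yC: "?y \<in> COpen" using nn_COpen[OF S] by auto
    have 1: "neg (neg j) = sup ?x ?y" unfolding j by (rule nn_sup[OF F E])
    have 2: "neg (neg m) = inf ?x ?y" unfolding m by (rule nn_inf[OF F])
    have sC: "sup ?x ?y \<in> COpen" using nn_COpen[OF S, of "sup x y"] unfolding nn_sup[OF F E] .
    have iC: "inf ?x ?y \<in> COpen" using nn_COpen[OF S, of "inf x y"] unfolding nn_inf[OF F] .
    have 3: "is_lub_in COpen {?x, ?y} (sup ?x ?y)"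
      unfolding is_lub_in_def using sC by simp
    have 4: "is_glb_in COpen {?x, ?y} (inf ?x ?y)"
      unfolding is_glb_in_def using iC by simp
    show ?thesis unfolding 1 2 by (rule c(3)[OF xC yC 3 4])
  qed
  have dir: "\<mu> (neg (neg s)) = (SUP d\<in>D. \<mu> (neg (neg d)))"
    if "directed_set D" "is_lub_in UNIV D s" for D and s :: 'a
  proof -
    have s: "s = Sup D" using that by (simp add: lub_UNIV)
    have D': "neg ` neg ` D \<subseteq> COpen" unfolding image_image by (intro image_subsetI nn_COpen[OF S])
    have dd: "directed_set (neg ` neg ` D)"
      unfolding directed_set_def
    proof (intro conjI ballI)
      show "neg ` neg ` D \<noteq> {}" using that(1) unfolding directed_set_def by simp
      fix x y assume xy: "x \<in> neg ` neg ` D" "y \<in> neg ` neg ` D"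
      obtain a where a: "a \<in> D" "x = neg (neg a)" using xy(1) by (auto simp: image_iff)
      obtain b where b: "b \<in> D" "y = neg (neg b)" using xy(2) by (auto simp: image_iff)
      note ab = a(1) b(1) a(2) b(2)
      have "\<exists>z\<in>D. a \<le> z \<and> b \<le> z" using that(1) a(1) b(1) unfolding directed_set_def by blast
      then obtain z where "z \<in> D" "a \<le> z" "b \<le> z" by blast
      then have "neg (neg z) \<in> neg ` neg ` D" "x \<le> neg (neg z)" "y \<le> neg (neg z)"
        using ab nn_mono[OF F, of a z] nn_mono[OF F, of b z] by auto
      then show "\<exists>z\<in>neg ` neg ` D. x \<le> z \<and> y \<le> z" by blast
    qed
    have "\<mu> (neg (neg s)) = (SUP d\<in>neg ` neg ` D. \<mu> d)"
      unfolding s by (rule c(5)[OF D' dd lub_COpen(2)[OF S, of D]])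
    also have "\<dots> = (SUP d\<in>D. \<mu> (neg (neg d)))" by (simp add: image_image)
    finally show ?thesis .
  qed
  have "continuous_valuation_on UNIV (\<lambda>a::'a. \<mu> (neg (neg a)))"
  proof (rule cvI)
    show "0 \<le> \<mu> (neg (neg x))" for x :: 'a using c(1) nn_COpen[OF S] by blast
    show "\<mu> (neg (neg z)) = 0" if "is_lub_in UNIV {} z" for z :: 'a
      using that mb neg_bot[OF F] by (simp add: lub_UNIV)
    show "\<mu> (neg (neg x)) + \<mu> (neg (neg y)) = \<mu> (neg (neg j)) + \<mu> (neg (neg m))"
      if "x \<in> UNIV" "y \<in> UNIV" "is_lub_in UNIV {x, y} j" "is_glb_in UNIV {x, y} m" for x y j m :: 'a
      using modular that(3,4) .
    show "\<mu> (neg (neg x)) \<le> \<mu> (neg (neg y))" if "x \<in> UNIV" "y \<in> UNIV" "x \<le> y" for x y :: 'a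
      using c(4)[OF nn_COpen[OF S] nn_COpen[OF S] nn_mono[OF F that(3)]] .
    show "\<mu> (neg (neg s)) = (SUP d\<in>D. \<mu> (neg (neg d)))"
      if "D \<subseteq> UNIV" "directed_set D" "is_lub_in UNIV D s" for D and s :: 'a
      using dir that(2,3) .
  qed
  then show ?thesis unfolding normal_valuation_def using nnn[OF F] by simp
qed

lemma restrict_of_nn:
  assumes S: "stonean TYPE('a::complete_lattice)" and M: "\<mu> \<in> COpen_valuations"
  shows "restrict_COpen (\<lambda>a::'a. \<mu> (neg (neg a))) = \<mu>"
  using M COpen_iff[OF S] unfolding restrict_COpen_def COpen_valuations_def by auto

lemma restrict_normal:
  assumes S: "stonean TYPE('a::complete_lattice)" and N: "normal_valuation (\<nu>::'a \<Rightarrow> real)"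
  shows "restrict_COpen \<nu> \<in> COpen_valuations"
proof -
  note F = stoneanD(1)[OF S]
  note E = stoneanD(2)[OF S]
  have cv: "continuous_valuation_on UNIV \<nu>" and nn: "\<And>a. \<nu> (neg (neg a)) = \<nu> a"
    using N unfolding normal_valuation_def by simp_all
  note c = cvD[OF cv]
  let ?r = "restrict_COpen \<nu>"
  have r: "\<And>x. x \<in> COpen \<Longrightarrow> ?r x = \<nu> x" unfolding restrict_COpen_def by simp
  have botC: "(bot::'a) \<in> COpen" unfolding COpen_def compact_open_def by (intro CollectI allI impI exI[of _ "{}"]) simp
  have nb: "\<nu> bot = 0" by (rule c(2)) (simp add: lub_UNIV)
  have "continuous_valuation_on COpen ?r"
  proof (rule cvI)
    show "0 \<le> ?r x" if "x \<in> COpen" for x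
      unfolding r[OF that] by (rule c(1)) simp
    show "?r z = 0" if "is_lub_in COpen {} z" for z
    proof -
      have "z \<le> bot" using that botC unfolding is_lub_in_def by simp
      then have "z = bot" by (simp add: bot_unique)
      then show ?thesis using nb r[OF botC] by simp
    qed
    show "?r x + ?r y = ?r j + ?r m"
      if xy: "x \<in> COpen" "y \<in> COpen" and jm: "is_lub_in COpen {x, y} j" "is_glb_in COpen {x, y} m"
      for x y j m
    proof -
      have "neg (neg (sup x y)) = sup x y" using nn_sup[OF F E, of x y] xy COpen_iff[OF S] by simp
      then have sC: "sup x y \<in> COpen" using COpen_iff[OF S] by simp
      have "neg (neg (inf x y)) = inf x y" using nn_inf[OF F, of x y] xy COpen_iff[OF S] by simp
      then have iC: "inf x y \<in> COpen" using COpen_iff[OF S] by simp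
      have "is_lub_in COpen {x, y} (sup x y)" unfolding is_lub_in_def using sC by simp
      then have j: "j = sup x y" using lub_unique[OF jm(1)] by simp
      have "is_glb_in COpen {x, y} (inf x y)" unfolding is_glb_in_def using iC by simp
      then have m: "m = inf x y" using glb_unique[OF jm(2)] by simp
      have "\<nu> x + \<nu> y = \<nu> (sup x y) + \<nu> (inf x y)"
        by (rule c(3)) (simp_all add: lub_UNIV glb_UNIV)
      then show ?thesis unfolding j m r[OF xy(1)] r[OF xy(2)] r[OF sC] r[OF iC] .
    qed
    show "?r x \<le> ?r y" if "x \<in> COpen" "y \<in> COpen" "x \<le> y" for x y
      unfolding r[OF that(1)] r[OF that(2)] by (rule c(4)) (simp_all add: that(3))
    show "?r s = (SUP d\<in>D. ?r d)"
      if "D \<subseteq> COpen" "directed_set D" "is_lub_in COpen D s" for D s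
    proof -
      have s: "s = neg (neg (Sup D))" using lub_unique[OF that(3) lub_COpen(1)[OF S, of D]] .
      have sC: "s \<in> COpen" using that(3) unfolding is_lub_in_def by simp
      have "?r s = \<nu> (Sup D)" using r[OF sC] nn[of "Sup D"] unfolding s by simp
      also have "\<dots> = (SUP d\<in>D. \<nu> d)" by (rule c(5)) (simp_all add: that(2) lub_UNIV)
      also have "\<dots> = (SUP d\<in>D. ?r d)"
      proof (rule SUP_cong)
        show "\<nu> x = ?r x" if "x \<in> D" for x using r \<open>D \<subseteq> COpen\<close> that by (simp add: subset_iff)
      qed simp
      finally show ?thesis .
    qed
  qed
  moreover have "\<forall>x. x \<notin> COpen \<longrightarrow> ?r x = 0" unfolding restrict_COpen_def by simp
  ultimately show ?thesis unfolding COpen_valuations_def by simp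
qed

theorem mainTheorem16:
  assumes "stonean TYPE('a::complete_lattice)"
  shows "bij_betw restrict_COpen {\<nu>::'a \<Rightarrow> real. normal_valuation \<nu>} COpen_valuations
       \<and> (\<forall>a::'a. neg (neg a) \<in> COpen)
       \<and> (\<forall>\<mu>\<in>COpen_valuations. normal_valuation (\<lambda>a::'a. \<mu> (neg (neg a)))
              \<and> restrict_COpen (\<lambda>a::'a. \<mu> (neg (neg a))) = \<mu>)"
proof -
  note S = assms
  have inj: "inj_on restrict_COpen {\<nu>::'a \<Rightarrow> real. normal_valuation \<nu>}"
  proof (rule inj_onI)
    fix \<nu>1 \<nu>2 :: "'a \<Rightarrow> real"
    assume "\<nu>1 \<in> {\<nu>. normal_valuation \<nu>}" "\<nu>2 \<in> {\<nu>. normal_valuation \<nu>}"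
      and eq: "restrict_COpen \<nu>1 = restrict_COpen \<nu>2"
    then have n1: "\<And>a. \<nu>1 (neg (neg a)) = \<nu>1 a" and n2: "\<And>a. \<nu>2 (neg (neg a)) = \<nu>2 a"
      unfolding normal_valuation_def by auto
    show "\<nu>1 = \<nu>2"
    proof
      fix a :: 'a
      have "restrict_COpen \<nu>1 (neg (neg a)) = restrict_COpen \<nu>2 (neg (neg a))" using eq by simp
      then show "\<nu>1 a = \<nu>2 a" using n1 n2 nn_COpen[OF S, of a]
        unfolding restrict_COpen_def by simp
    qed
  qed
  have img: "restrict_COpen ` {\<nu>::'a \<Rightarrow> real. normal_valuation \<nu>} = COpen_valuations"
  proof
    show "restrict_COpen ` {\<nu>::'a \<Rightarrow> real. normal_valuation \<nu>} \<subseteq> COpen_valuations"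
      using restrict_normal[OF S] by auto
    show "COpen_valuations \<subseteq> restrict_COpen ` {\<nu>::'a \<Rightarrow> real. normal_valuation \<nu>}"
    proof
      fix \<mu> :: "'a \<Rightarrow> real" assume M: "\<mu> \<in> COpen_valuations"
      then show "\<mu> \<in> restrict_COpen ` {\<nu>. normal_valuation \<nu>}"
        using normal_of[OF S M] restrict_of_nn[OF S M]
        by (metis (mono_tags, lifting) image_eqI mem_Collect_eq)
    qed
  qed
  show ?thesis
    using inj img nn_COpen[OF S] normal_of[OF S] restrict_of_nn[OF S]
    unfolding bij_betw_def by blast
qed

end
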